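(* For every $\lambda=\sum_{i=1}^r m_i\omega_i\in P^+$, the number of elements of $\mathcal B^r(\lambda)$ (equivalently, the number of families $((\ell_{i,j},\mathbf s_{i,j}))_{1\le i\le j\le r}$ satisfying the defining conditions below) equals $\prod_{i=1}^r\binom{r+1}{i}^{m_i}$.
   Context: $\mathfrak g=\mathfrak{sl}_{r+1}(\mathbb C)$, $\omega_i$ fundamental weights, $P^+=\sum\mathbb N\omega_i$, $x^-_{i,j}=E_{j+1,i}$ for $1\le i\le j\le r$. Let $\mathbf F$ be the set of pairs $(\ell,\mathbf s)$ with $\ell\in\mathbb N$ and $\mathbf s=(\mathbf s(1)\le\dots\le\mathbf s(\ell))\in\mathbb N^\ell$ ($\mathbf s=\emptyset$ if $\ell=0$). For $m\in\mathbb Z$: $\mathbf F(m)=\emptyset$ if $m<0$; for $m\ge0$, $\mathbf F(m)$ consists of $(0,\emptyset)$ and the pairs with $\ell>0$, $\mathbf s(\ell)\le m-\ell$. $\mathbf x^-_{i,j}(\ell,\mathbf s)=\prod_{p=1}^\ell(x^-_{i,j}\otimes t^{\mathbf s(p)})\in U(\mathfrak n^-[t])$. $\mathcal B^r(\lambda)$ is the set of ordered products $\prod_{j=1}^r\prod_{i=1}^j\mathbf x^-_{i,j}(\ell_{i,j},\mathbf s_{i,j})$ (ordered by increasing $j$, then increasing $i$) with $(\ell_{i,j},\mathbf s_{i,j})\in\mathbf F(m_{i,j})$ for all $1\le i\le j\le r$, where $m_{i,j}=m_i+\sum_{s=j+1}^r(\ell_{i+1,s}-\ell_{i,s})$; these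 are distinct PBW monomials. *)

theory Defs
  imports Main
begin

text \<open>An element (l, s) of F is encoded as a sorted (non-decreasing) list s of naturals;
  l is its length. The empty list encodes (0, empty).\<close>

definition Fset :: "int \<Rightarrow> nat list set" where
  "Fset m = (if m < 0 then {} else
     {[]} \<union> {s. s \<noteq> [] \<and> sorted s \<and> int (last s) \<le> m - int (length s)})"

definition mij :: "(nat \<Rightarrow> nat) \<Rightarrow> nat \<Rightarrow> (nat \<times> nat \<Rightarrow> nat list) \<Rightarrow> nat \<Rightarrow> nat \<Rightarrow> int" where
  "mij m r f i j = int (m i)
     + (\<Sum>s\<in>{j+1..r}. int (length (f (i+1, s))) - int (length (f (i, s))))"

definition Bfam :: "nat \<Rightarrow> (nat \<Rightarrow> nat) \<Rightarrow> (nat \<times> nat \<Rightarrow> nat list) set" where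
  "Bfam r m = {f. (\<forall>i j. \<not> (1 \<le> i \<and> i \<le> j \<and> j \<le> r) \<longrightarrow> f (i, j) = [])
      \<and> (\<forall>i j. 1 \<le> i \<longrightarrow> i \<le> j \<longrightarrow> j \<le> r \<longrightarrow> f (i, j) \<in> Fset (mij m r f i j))}"

end

theory Submission
  imports Defs "HOL-Library.FuncSet"
begin

lemma Fset_0: "Fset 0 = {[]}"
  unfolding Fset_def apply auto
  subgoal for x by (subgoal_tac "0 < length x") auto
  done

lemma Fset_Suc: "Fset (int (Suc n)) = Cons 0 ` Fset (int n) \<union> map Suc ` Fset (int n)"
proof
  show "Cons 0 ` Fset (int n) \<union> map Suc ` Fset (int n) \<subseteq> Fset (int (Suc n))"
  proof
    fix s assume "s \<in> Cons 0 ` Fset (int n) \<union> map Suc ` Fset (int n)"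
    then consider t where "t \<in> Fset (int n)" "s = 0 # t" | t where "t \<in> Fset (int n)" "s = map Suc t" by blast
    then show "s \<in> Fset (int (Suc n))"
    proof cases
      case 1 then show ?thesis unfolding Fset_def by (cases t) (auto simp: last_ConsR)
    next
      case 2 then show ?thesis unfolding Fset_def by (auto simp: sorted_map last_map)
    qed
  qed
next
  show "Fset (int (Suc n)) \<subseteq> Cons 0 ` Fset (int n) \<union> map Suc ` Fset (int n)"
  proof
    fix s assume s: "s \<in> Fset (int (Suc n))"
    show "s \<in> Cons 0 ` Fset (int n) \<union> map Suc ` Fset (int n)"
    proof (cases s)
      case Nil
      then have "s = map Suc []" by simp
      moreover have "[] \<in> Fset (int n)" by (simp add: Fset_def)
      ultimately show ?thesis by blast
    next
      case (Cons a t)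
      show ?thesis
      proof (cases "a = 0")
        case True
        have "t \<in> Fset (int n)" using s Cons True unfolding Fset_def
          by (cases t) (auto simp: last_ConsR)
        then show ?thesis using Cons True by blast
      next
        case False
        have ge: "\<forall>x\<in>set s. 1 \<le> x" using s Cons False unfolding Fset_def by auto
        define t' where "t' = map (\<lambda>x. x - 1) s"
        have eq: "s = map Suc t'" unfolding t'_def using ge by (induct s) auto
        have "t' \<in> Fset (int n)" using s Cons eq unfolding Fset_def
          by (auto simp: sorted_map last_map)
        then show ?thesis using eq by blast
      qed
    qed
  qed
qed

lemma Fset_props: "finite (Fset (int n)) \<and> (\<forall>s\<in>Fset (int n). length s \<le> n) \<and>
   (\<Sum>s\<in>Fset (int n). (a::nat) ^ (n - length s) * b ^ length s) = (a + b) ^ n"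
proof (induct n)
  case 0
  then show ?case by (simp add: Fset_0)
next
  case (Suc n)
  let ?F = "Fset (int n)"
  have fin: "finite ?F" and len: "\<forall>s\<in>?F. length s \<le> n" using Suc by auto
  have disj: "Cons 0 ` ?F \<inter> map Suc ` ?F = {}"
  proof -
    { fix t u assume "(0::nat) # t = map Suc u" then have False by (cases u) auto }
    then show ?thesis by blast
  qed
  have inj1: "inj_on (Cons 0) ?F" by (auto simp: inj_on_def)
  have inj2: "inj_on (map Suc) ?F" by (auto simp: inj_on_def)
  have "(\<Sum>s\<in>Fset (int (Suc n)). a ^ (Suc n - length s) * b ^ length s)
      = (\<Sum>s\<in>Cons 0 ` ?F. a ^ (Suc n - length s) * b ^ length s)
        + (\<Sum>s\<in>map Suc ` ?F. a ^ (Suc n - length s) * b ^ length s)"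
    unfolding Fset_Suc using fin disj by (simp add: sum.union_disjoint)
  also have "\<dots> = (\<Sum>s\<in>?F. b * (a ^ (n - length s) * b ^ length s))
        + (\<Sum>s\<in>?F. a * (a ^ (n - length s) * b ^ length s))"
    using inj1 inj2 len by (simp add: sum.reindex Suc_diff_le ac_simps)
  also have "\<dots> = (a + b) ^ Suc n"
    using Suc by (simp add: sum_distrib_left[symmetric] algebra_simps)
  finally show ?case using Suc unfolding Fset_Suc by auto
qed

lemma Fset_len: "s \<in> Fset (int n) \<Longrightarrow> length s \<le> n"
  using Fset_props by blast

lemma Fset_fin: "finite (Fset (int n))"
  using Fset_props by blast

lemma Fset_sum: "(\<Sum>s\<in>Fset (int n). (a::nat) ^ (n - length s) * b ^ length s) = (a + b) ^ n"
  using Fset_props by blast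

definition comb :: "nat \<Rightarrow> (nat \<Rightarrow> nat list) \<Rightarrow> (nat \<times> nat \<Rightarrow> nat list) \<Rightarrow> nat \<times> nat \<Rightarrow> nat list" where
  "comb R col g = (\<lambda>(i,j). if j = R then (if 1 \<le> i \<and> i \<le> R then col i else []) else g (i,j))"

definition mm :: "(nat \<Rightarrow> nat) \<Rightarrow> (nat \<Rightarrow> nat list) \<Rightarrow> nat \<Rightarrow> nat" where
  "mm m col i = m i + length (col (i+1)) - length (col i)"

lemma Bfam_0: "Bfam 0 m = {\<lambda>_. []}"
  unfolding Bfam_def by auto

lemma mij_top: "mij m r f i r = int (m i)"
  unfolding mij_def by simp

lemma mij_comb:
  assumes col: "col \<in> PiE {1..Suc r} (\<lambda>i. Fset (int (m i)))"
    and i: "1 \<le> i" "i \<le> j" "j \<le> r"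
  shows "mij m (Suc r) (comb (Suc r) col g) i j = mij (mm m col) r g i j"
proof -
  have ci: "length (col i) \<le> m i" using col i by (intro Fset_len) auto
  have set: "{j+1..Suc r} = insert (Suc r) {j+1..r}" using i by auto
  have "mij m (Suc r) (comb (Suc r) col g) i j
      = int (m i) + (int (length (col (i+1))) - int (length (col i)))
        + (\<Sum>s\<in>{j+1..r}. int (length (g (i+1, s))) - int (length (g (i, s))))"
    unfolding mij_def set using i
    by (simp add: comb_def)
  also have "\<dots> = mij (mm m col) r g i j"
    unfolding mij_def mm_def using ci by simp
  finally show ?thesis .
qed

lemma Bfam_Suc:
  "Bfam (Suc r) m = (\<lambda>(col,g). comb (Suc r) col g) `
     (SIGMA col:PiE {1..Suc r} (\<lambda>i. Fset (int (m i))). Bfam r (mm m col))"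
  (is "?L = ?f ` ?S")
proof
  show "?f ` ?S \<subseteq> ?L"
  proof
    fix F assume "F \<in> ?f ` ?S"
    then obtain col g where col: "col \<in> PiE {1..Suc r} (\<lambda>i. Fset (int (m i)))"
      and g: "g \<in> Bfam r (mm m col)" and F: "F = comb (Suc r) col g" by auto
    have out: "F (i, j) = []" if "\<not> (1 \<le> i \<and> i \<le> j \<and> j \<le> Suc r)" for i j
      using g that unfolding F comb_def Bfam_def by auto
    have inr: "F (i, j) \<in> Fset (mij m (Suc r) F i j)" if "1 \<le> i" "i \<le> j" "j \<le> Suc r" for i j
    proof (cases "j = Suc r")
      case True
      then show ?thesis using col that by (auto simp: mij_top F comb_def PiE_iff)
    next
      case False
      then have "j \<le> r" using that by simp
      then have "mij m (Suc r) F i j = mij (mm m col) r g i j"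
        using mij_comb[OF col that(1,2)] F by simp
      moreover have "F (i,j) = g (i,j)" using False unfolding F comb_def by simp
      ultimately show ?thesis using g that \<open>j \<le> r\<close> unfolding Bfam_def by auto
    qed
    show "F \<in> ?L" unfolding Bfam_def using out inr by blast
  qed
next
  show "?L \<subseteq> ?f ` ?S"
  proof
    fix f assume f: "f \<in> ?L"
    define col where "col = restrict (\<lambda>i. f (i, Suc r)) {1..Suc r}"
    define g where "g = (\<lambda>(i,j). if j = Suc r then [] else f (i,j))"
    have fout: "f (i, j) = []" if "\<not> (1 \<le> i \<and> i \<le> j \<and> j \<le> Suc r)" for i j
      using f that unfolding Bfam_def by blast
    have fin: "f (i, j) \<in> Fset (mij m (Suc r) f i j)" if "1 \<le> i" "i \<le> j" "j \<le> Suc r" for i j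
      using f that unfolding Bfam_def by blast
    have feq: "f = comb (Suc r) col g"
    proof
      fix p :: "nat \<times> nat"
      obtain i j where p: "p = (i,j)" by (cases p)
      show "f p = comb (Suc r) col g p"
        unfolding p comb_def col_def g_def using fout[of i j] by auto
    qed
    have col: "col \<in> PiE {1..Suc r} (\<lambda>i. Fset (int (m i)))"
      unfolding col_def using fin[of _ "Suc r"] by (auto simp: mij_top)
    have "g \<in> Bfam r (mm m col)"
    proof -
      have "g (i, j) = []" if "\<not> (1 \<le> i \<and> i \<le> j \<and> j \<le> r)" for i j
        using fout[of i j] that unfolding g_def by auto
      moreover have "g (i, j) \<in> Fset (mij (mm m col) r g i j)" if "1 \<le> i" "i \<le> j" "j \<le> r" for i j
      proof -
        have "mij m (Suc r) f i j = mij (mm m col) r g i j"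
          using mij_comb[OF col that] feq by simp
        then show ?thesis using fin[of i j] that unfolding g_def by auto
      qed
      ultimately show ?thesis unfolding Bfam_def by blast
    qed
    then show "f \<in> ?f ` ?S" using col feq by force
  qed
qed

lemma comb_inj:
  "inj_on (\<lambda>(col,g). comb (Suc r) col g)
     (SIGMA col:PiE {1..Suc r} (\<lambda>i. Fset (int (m i))). Bfam r (mm m col))"
proof (rule inj_onI, clarsimp)
  fix col g col' g'
  assume eq: "comb (Suc r) col g = comb (Suc r) col' g'"
    and col0: "col \<in> PiE {Suc 0..Suc r} (\<lambda>i. Fset (int (m i)))"
    and g: "g \<in> Bfam r (mm m col)"
    and col0': "col' \<in> PiE {Suc 0..Suc r} (\<lambda>i. Fset (int (m i)))"
    and g': "g' \<in> Bfam r (mm m col')"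
  have col: "col \<in> PiE {1..Suc r} (\<lambda>i. Fset (int (m i)))"
    and col': "col' \<in> PiE {1..Suc r} (\<lambda>i. Fset (int (m i)))" using col0 col0' by simp_all
  have "col = col'"
  proof (rule extensionalityI)
    show "col \<in> extensional {1..Suc r}" "col' \<in> extensional {1..Suc r}"
      using col col' by (auto simp: PiE_iff)
  next
    fix i assume "i \<in> {1..Suc r}"
    then show "col i = col' i" using fun_cong[OF eq, of "(i, Suc r)"] unfolding comb_def by auto
  qed
  moreover have "g = g'"
  proof
    fix p :: "nat \<times> nat"
    obtain i j where p: "p = (i,j)" by (cases p)
    show "g p = g' p"
    proof (cases "j = Suc r")
      case True
      then show ?thesis using g g' unfolding p Bfam_def by auto
    next
      case False
      then show ?thesis using fun_cong[OF eq, of p] unfolding p comb_def by auto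
    qed
  qed
  ultimately show "col = col' \<and> g = g'" by simp
qed

lemma alg:
  fixes l :: "nat \<Rightarrow> nat"
  assumes le: "\<And>i. i \<in> {1..Suc r} \<Longrightarrow> l i \<le> m i"
  shows "(\<Prod>i=1..r. (Suc r choose i) ^ (m i + l (i+1) - l i))
       = (\<Prod>i\<in>{1..Suc r}. (Suc r choose i) ^ (m i - l i) * (Suc r choose (i-1)) ^ (l i))"
proof -
  have A: "(\<Prod>i\<in>{1..Suc r}. (Suc r choose i) ^ (m i - l i))
      = (\<Prod>i=1..r. (Suc r choose i) ^ (m i - l i))"
    by (simp add: prod.cl_ivl_Suc)
  have B: "(\<Prod>i\<in>{1..Suc r}. (Suc r choose (i-1)) ^ (l i))
      = (\<Prod>i=1..r. (Suc r choose i) ^ (l (i+1)))"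
  proof -
    have "(\<Prod>i\<in>{1..Suc r}. (Suc r choose (i-1)) ^ (l i))
        = (\<Prod>i\<in>{0..r}. (Suc r choose i) ^ (l (Suc i)))"
      using prod.shift_bounds_cl_Suc_ivl[of "\<lambda>i. (Suc r choose (i-1)) ^ (l i)" 0 r] by simp
    also have "\<dots> = (\<Prod>i\<in>{Suc 0..r}. (Suc r choose i) ^ (l (Suc i)))"
      by (simp add: prod.atLeast_Suc_atMost)
    finally show ?thesis by simp
  qed
  have "(\<Prod>i\<in>{1..Suc r}. (Suc r choose i) ^ (m i - l i) * (Suc r choose (i-1)) ^ (l i))
      = (\<Prod>i=1..r. (Suc r choose i) ^ (m i - l i)) * (\<Prod>i=1..r. (Suc r choose i) ^ (l (i+1)))"
    by (simp only: prod.distrib A B)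
  also have "\<dots> = (\<Prod>i=1..r. (Suc r choose i) ^ (m i - l i) * (Suc r choose i) ^ (l (i+1)))"
    by (simp only: prod.distrib)
  also have "\<dots> = (\<Prod>i=1..r. (Suc r choose i) ^ (m i + l (i+1) - l i))"
  proof (rule prod.cong[OF refl])
    fix i assume "i \<in> {1..r}"
    then have "l i \<le> m i" using le by simp
    then have "m i - l i + l (i+1) = m i + l (i+1) - l i" by simp
    then show "(Suc r choose i) ^ (m i - l i) * (Suc r choose i) ^ (l (i+1))
        = (Suc r choose i) ^ (m i + l (i+1) - l i)" by (metis power_add)
  qed
  finally show ?thesis by simp
qed

theorem main: "card (Bfam r m) = (\<Prod>i=1..r. ((r + 1) choose i) ^ (m i))"
proof (induct r arbitrary: m)
  case 0
  then show ?case by (simp add: Bfam_0)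
next
  case (Suc r)
  let ?C = "PiE {1..Suc r} (\<lambda>i. Fset (int (m i)))"
  let ?h = "\<lambda>i s. (Suc r choose i) ^ (m i - length s) * (Suc r choose (i-1)) ^ (length s)"
  have finC: "finite ?C" by (simp add: Fset_fin finite_PiE)
  have pos: "0 < (\<Prod>i=1..r. ((r + 1) choose i) ^ (mm m col i))" for col
    by (rule prod_pos) simp
  have finB: "finite (Bfam r (mm m col))" for col
    using Suc[of "mm m col"] pos[of col] card_gt_0_iff by fastforce
  have "card (Bfam (Suc r) m) = card (SIGMA col:?C. Bfam r (mm m col))"
    unfolding Bfam_Suc by (rule card_image[OF comb_inj])
  also have "\<dots> = (\<Sum>col\<in>?C. card (Bfam r (mm m col)))"
    using finC finB by (simp add: card_SigmaI)
  also have "\<dots> = (\<Sum>col\<in>?C. \<Prod>i\<in>{1..Suc r}. ?h i (col i))"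
  proof (rule sum.cong[OF refl])
    fix col assume col: "col \<in> ?C"
    have "card (Bfam r (mm m col)) = (\<Prod>i=1..r. (Suc r choose i) ^ (mm m col i))"
      using Suc by simp
    also have "\<dots> = (\<Prod>i\<in>{1..Suc r}. ?h i (col i))"
      unfolding mm_def
      by (rule alg) (use col in \<open>auto intro: Fset_len\<close>)
    finally show "card (Bfam r (mm m col)) = (\<Prod>i\<in>{1..Suc r}. ?h i (col i))" .
  qed
  also have "\<dots> = (\<Prod>i\<in>{1..Suc r}. \<Sum>s\<in>Fset (int (m i)). ?h i s)"
    by (rule prod_sum_PiE[symmetric]) (auto simp: Fset_fin)
  also have "\<dots> = (\<Prod>i\<in>{1..Suc r}. (Suc (Suc r) choose i) ^ m i)"
  proof (rule prod.cong[OF refl])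
    fix i :: nat assume "i \<in> {1..Suc r}"
    then obtain k where k: "i = Suc k" by (cases i) auto
    show "(\<Sum>s\<in>Fset (int (m i)). ?h i s) = (Suc (Suc r) choose i) ^ m i"
      unfolding Fset_sum k by (simp add: add.commute)
  qed
  finally show ?case by simp
qed

theorem proposition2p1:
  fixes r :: nat and m :: "nat \<Rightarrow> nat"
  shows "card (Bfam r m) = (\<Prod>i=1..r. ((r + 1) choose i) ^ (m i))"
  by (rule main)

end
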